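(* Let $\mathbf L=(L,\vee,\wedge,{}',0,1)$ be a bounded lattice with complementation $'$. Then the following are equivalent: (a) for all $x,y,z\in L$, $x\odot y\le z$ implies $x\le y\to z$; (b) $\mathbf L$ satisfies the identity $x\vee y'\approx y'\vee\big((x\vee y')\wedge y\big)$; (c) for all $x,y\in L$, $x'\le y$ implies $y=x'\vee(y\wedge x)$. Furthermore, the following are equivalent: (d) for all $x,y,z\in L$, $x\le y\to z$ implies $x\odot y\le z$; (e) $\mathbf L$ satisfies the identity $x\wedge y\approx x\wedge\big((x\wedge y)\vee x'\big)$; (f) for all $x,y\in L$, $x\le y$ implies $x=(y'\vee x)\wedge y$.
   Context: A complementation on a bounded lattice is a unary operation $'$ with $x\vee x'=1$ and $x\wedge x'=0$ for all $x$ (no involutivity or antitonicity is assumed). The Sasaki operations are $x\odot y=(x\vee y')\wedge y$ and $x\to y=x'\vee(x\wedge y)$. *)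

theory Defs
  imports Main
begin

definition complementation :: "('a::bounded_lattice \<Rightarrow> 'a) \<Rightarrow> bool" where
  "complementation c \<longleftrightarrow> (\<forall>x. sup x (c x) = top \<and> inf x (c x) = bot)"

definition sasaki_prod :: "('a::lattice \<Rightarrow> 'a) \<Rightarrow> 'a \<Rightarrow> 'a \<Rightarrow> 'a" where
  "sasaki_prod c x y = inf (sup x (c y)) y"

definition sasaki_imp :: "('a::lattice \<Rightarrow> 'a) \<Rightarrow> 'a \<Rightarrow> 'a \<Rightarrow> 'a" where
  "sasaki_imp c x y = sup (c x) (inf x y)"

end

theory Submission
  imports Defs
begin

theorem theorem1:
  fixes c :: "'a::bounded_lattice \<Rightarrow> 'a"
  assumes "complementation c"
  shows "((\<forall>x y z. sasaki_prod c x y \<le> z \<longrightarrow> x \<le> sasaki_imp c y z)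
          \<longleftrightarrow> (\<forall>x y. sup x (c y) = sup (c y) (inf (sup x (c y)) y)))
       \<and> ((\<forall>x y. sup x (c y) = sup (c y) (inf (sup x (c y)) y))
          \<longleftrightarrow> (\<forall>x y. c x \<le> y \<longrightarrow> y = sup (c x) (inf y x)))
       \<and> ((\<forall>x y z. x \<le> sasaki_imp c y z \<longrightarrow> sasaki_prod c x y \<le> z)
          \<longleftrightarrow> (\<forall>x y. inf x y = inf x (sup (inf x y) (c x))))
       \<and> ((\<forall>x y. inf x y = inf x (sup (inf x y) (c x)))
          \<longleftrightarrow> (\<forall>x y. x \<le> y \<longrightarrow> x = inf (sup (c y) x) y))"
proof (intro conjI iffI allI impI)
  fix x y :: 'a
  assume a: "\<forall>x y z. sasaki_prod c x y \<le> z \<longrightarrow> x \<le> sasaki_imp c y z"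
  have "x \<le> sasaki_imp c y (inf (sup x (c y)) y)"
    using a[rule_format, of x y "inf (sup x (c y)) y"] by (simp add: sasaki_prod_def)
  hence "x \<le> sup (c y) (inf (sup x (c y)) y)"
    by (simp add: sasaki_imp_def inf_commute)
  thus "sup x (c y) = sup (c y) (inf (sup x (c y)) y)"
    by (simp add: order_antisym le_supI2)
next
  fix x y z :: 'a
  assume b: "\<forall>x y. sup x (c y) = sup (c y) (inf (sup x (c y)) y)"
    and h: "sasaki_prod c x y \<le> z"
  have "inf (sup x (c y)) y \<le> inf y z" using h by (simp add: sasaki_prod_def)
  hence "sup (c y) (inf (sup x (c y)) y) \<le> sup (c y) (inf y z)" by (rule sup_mono[OF order_refl])
  hence "sup x (c y) \<le> sasaki_imp c y z" using b by (simp add: sasaki_imp_def)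
  thus "x \<le> sasaki_imp c y z" by simp
next
  fix x y :: 'a
  assume b: "\<forall>x y. sup x (c y) = sup (c y) (inf (sup x (c y)) y)" and h: "c x \<le> y"
  have "sup y (c x) = sup (c x) (inf (sup y (c x)) x)" using b by blast
  moreover have "sup y (c x) = y" using h by (simp add: sup_absorb1)
  ultimately show "y = sup (c x) (inf y x)" by simp
next
  fix x y :: 'a
  assume cc: "\<forall>x y. c x \<le> y \<longrightarrow> y = sup (c x) (inf y x)"
  show "sup x (c y) = sup (c y) (inf (sup x (c y)) y)"
    using cc[rule_format, of y "sup x (c y)"] by simp
next
  fix x y :: 'a
  assume d: "\<forall>x y z. x \<le> sasaki_imp c y z \<longrightarrow> sasaki_prod c x y \<le> z"
  let ?w = "inf x (sup (inf x y) (c x))"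
  have "?w \<le> sasaki_imp c x (inf x y)"
    by (simp add: sasaki_imp_def sup_commute le_infI2)
  hence "sasaki_prod c ?w x \<le> inf x y" using d by blast
  hence "inf (sup ?w (c x)) x \<le> inf x y" by (simp add: sasaki_prod_def)
  moreover have "?w \<le> inf (sup ?w (c x)) x" by simp
  ultimately have "?w \<le> inf x y" by (rule order_trans[rotated])
  thus "inf x y = ?w" by (simp add: order_antisym)
next
  fix x y z :: 'a
  assume e: "\<forall>x y. inf x y = inf x (sup (inf x y) (c x))"
    and h: "x \<le> sasaki_imp c y z"
  have "inf (sup x (c y)) y \<le> inf (sup (sup (c y) (inf y z)) (c y)) y"
    using h by (simp add: sasaki_imp_def le_infI1 le_supI1)
  also have "\<dots> = inf y (sup (inf y z) (c y))"
    by (simp add: inf_commute sup_commute sup_left_commute)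
  also have "\<dots> = inf y z" using e by metis
  finally show "sasaki_prod c x y \<le> z" by (simp add: sasaki_prod_def)
next
  fix x y :: 'a
  assume e: "\<forall>x y. inf x y = inf x (sup (inf x y) (c x))" and h: "x \<le> y"
  have "inf y x = inf y (sup (inf y x) (c y))" using e by blast
  moreover have "inf y x = x" using h by (simp add: inf_absorb2)
  ultimately show "x = inf (sup (c y) x) y" by (simp add: inf_commute sup_commute)
next
  fix x y :: 'a
  assume f: "\<forall>x y. x \<le> y \<longrightarrow> x = inf (sup (c y) x) y"
  have "inf x y = inf (sup (c x) (inf x y)) x" using f[rule_format, of "inf x y" x] by simp
  thus "inf x y = inf x (sup (inf x y) (c x))" by (simp add: inf_commute sup_commute)
qed

end
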